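(* Let $\mu$ be a valuation on $\mathrm{Spec}(R)$ and $f\in R$, $f\ge0$. If $r<r'<s'<s$ are rationals and $p<q$ are rationals, then $p<\Delta(r,s)$ or $\Delta[r',s']<q$.
   Context: $R$ is a Riesz space over $\mathbb{Q}$ with strong unit $1$; rationals identified with multiples of $1$. $\mathrm{Spec}(R)$ is the distributive lattice generated by $D(a)$, $a\in R$, subject to $D(1)=1$; $D(a)\wedge D(-a)=0$; $D(a+b)\le D(a)\vee D(b)$; $D(a)=0$ if $a\le0$; $D(a\vee b)=D(a)\vee D(b)$. A valuation is a map $\mu$ from $\mathrm{Spec}(R)$ to nonnegative lower reals (inhabited, downward closed, rounded sets of rationals; $p<x$ means $p\in x$) with $\mu(0)=0$, $\mu(1)=1$, $\mu(x)+\mu(y)=\mu(x\vee y)+\mu(x\wedge y)$, monotone, and $\mu(D(a))\le\bigvee_{\varepsilon>0}\mu(D(a-\varepsilon))$. $\Delta(r,s):=\mu(D(f-r)\wedge D(s-f))$ (lower real) and $\Delta[r,s]$ is the upper real $1-\mu(D(r-f))-\mu(D(f-s))$. *)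

theory Defs
  imports Main "HOL-Library.Lattice_Algebras"
begin

text \<open>R is a type with a lattice-ordered abelian group structure, a scalar
multiplication by rationals making it a Q-vector space whose order is compatible
with multiplication by nonnegative rationals, and a strong unit u (the element 1
of the paper).\<close>

definition riesz_space_unit :: "(rat \<Rightarrow> 'a::lattice_ab_group_add \<Rightarrow> 'a) \<Rightarrow> 'a \<Rightarrow> bool" where
  "riesz_space_unit scale u \<longleftrightarrow>
     vector_space scale \<and>
     (\<forall>q a b. 0 \<le> q \<longrightarrow> a \<le> b \<longrightarrow> scale q a \<le> scale q b) \<and>
     0 \<le> u \<and>
     (\<forall>a. \<exists>n::nat. sup a (- a) \<le> scale (of_nat n) u)"

text \<open>The rational q, identified with q times the unit.\<close>
definition ratR :: "(rat \<Rightarrow> 'a \<Rightarrow> 'a) \<Rightarrow> 'a \<Rightarrow> rat \<Rightarrow> 'a" where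
  "ratR scale u q = scale q u"

datatype 'a latterm = Gen 'a | Bot | Top | Join "'a latterm" "'a latterm" | Meet "'a latterm" "'a latterm"

text \<open>The congruence on lattice terms generated by the bounded distributive lattice
laws and the defining relations of Spec(R); Spec(R) is the quotient of
the term algebra by this congruence.\<close>

inductive spec_eq :: "'a::lattice_ab_group_add \<Rightarrow> 'a latterm \<Rightarrow> 'a latterm \<Rightarrow> bool"
  for u :: "'a" where
  refl: "spec_eq u x x"
| sym: "spec_eq u x y \<Longrightarrow> spec_eq u y x"
| trans: "spec_eq u x y \<Longrightarrow> spec_eq u y z \<Longrightarrow> spec_eq u x z"
| cong_join: "spec_eq u x x' \<Longrightarrow> spec_eq u y y' \<Longrightarrow> spec_eq u (Join x y) (Join x' y')"
| cong_meet: "spec_eq u x x' \<Longrightarrow> spec_eq u y y' \<Longrightarrow> spec_eq u (Meet x y) (Meet x' y')"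
| join_assoc: "spec_eq u (Join (Join x y) z) (Join x (Join y z))"
| meet_assoc: "spec_eq u (Meet (Meet x y) z) (Meet x (Meet y z))"
| join_comm: "spec_eq u (Join x y) (Join y x)"
| meet_comm: "spec_eq u (Meet x y) (Meet y x)"
| absorb1: "spec_eq u (Join x (Meet x y)) x"
| absorb2: "spec_eq u (Meet x (Join x y)) x"
| distrib: "spec_eq u (Meet x (Join y z)) (Join (Meet x y) (Meet x z))"
| join_bot: "spec_eq u (Join x Bot) x"
| meet_top: "spec_eq u (Meet x Top) x"
| D_one: "spec_eq u (Gen u) Top"
| D_neg: "spec_eq u (Meet (Gen a) (Gen (- a))) Bot"
| D_add: "spec_eq u (Meet (Gen (a + b)) (Join (Gen a) (Gen b))) (Gen (a + b))"
| D_nonpos: "a \<le> 0 \<Longrightarrow> spec_eq u (Gen a) Bot"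
| D_sup: "spec_eq u (Gen (sup a b)) (Join (Gen a) (Gen b))"

definition spec_le :: "'a::lattice_ab_group_add \<Rightarrow> 'a latterm \<Rightarrow> 'a latterm \<Rightarrow> bool" where
  "spec_le u x y \<longleftrightarrow> spec_eq u (Meet x y) x"

text \<open>A lower real x is represented by the set of rationals p with p < x.\<close>
definition lower_real :: "rat set \<Rightarrow> bool" where
  "lower_real x \<longleftrightarrow> (\<exists>p. p \<in> x) \<and> (\<forall>p q. q \<in> x \<longrightarrow> p \<le> q \<longrightarrow> p \<in> x)
                     \<and> (\<forall>p\<in>x. \<exists>q\<in>x. p < q)"

definition nonneg_lower_real :: "rat set \<Rightarrow> bool" where
  "nonneg_lower_real x \<longleftrightarrow> lower_real x \<and> (\<forall>p::rat. p < 0 \<longrightarrow> p \<in> x)"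

definition lr_const :: "rat \<Rightarrow> rat set" where
  "lr_const c = {p. p < c}"

definition lr_add :: "rat set \<Rightarrow> rat set \<Rightarrow> rat set" where
  "lr_add x y = {p + q | p q. p \<in> x \<and> q \<in> y}"

text \<open>The upper real 1 - x - y for lower reals x, y, represented by the set of
rationals q with 1 - x - y < q.\<close>
definition ur_one_minus :: "rat set \<Rightarrow> rat set \<Rightarrow> rat set" where
  "ur_one_minus x y = {q. \<exists>a\<in>x. \<exists>b\<in>y. 1 - a - b < q}"

definition valuation ::
  "(rat \<Rightarrow> 'a::lattice_ab_group_add \<Rightarrow> 'a) \<Rightarrow> 'a \<Rightarrow> ('a latterm \<Rightarrow> rat set) \<Rightarrow> bool" where
  "valuation scale u \<mu> \<longleftrightarrow>
     (\<forall>x y. spec_eq u x y \<longrightarrow> \<mu> x = \<mu> y) \<and>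
     (\<forall>x. nonneg_lower_real (\<mu> x)) \<and>
     \<mu> Bot = lr_const 0 \<and>
     \<mu> Top = lr_const 1 \<and>
     (\<forall>x y. lr_add (\<mu> x) (\<mu> y) = lr_add (\<mu> (Join x y)) (\<mu> (Meet x y))) \<and>
     (\<forall>x y. spec_le u x y \<longrightarrow> \<mu> x \<subseteq> \<mu> y) \<and>
     (\<forall>a. \<mu> (Gen a) \<subseteq> (\<Union>\<epsilon>\<in>{\<epsilon>::rat. 0 < \<epsilon>}. \<mu> (Gen (a - ratR scale u \<epsilon>))))"

definition Delta_open :: "(rat \<Rightarrow> 'a::lattice_ab_group_add \<Rightarrow> 'a) \<Rightarrow> 'a \<Rightarrow> ('a latterm \<Rightarrow> rat set) \<Rightarrow> 'a \<Rightarrow> rat \<Rightarrow> rat \<Rightarrow> rat set" where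
  "Delta_open scale u \<mu> f r s = \<mu> (Meet (Gen (f - ratR scale u r)) (Gen (ratR scale u s - f)))"

definition Delta_closed :: "(rat \<Rightarrow> 'a::lattice_ab_group_add \<Rightarrow> 'a) \<Rightarrow> 'a \<Rightarrow> ('a latterm \<Rightarrow> rat set) \<Rightarrow> 'a \<Rightarrow> rat \<Rightarrow> rat \<Rightarrow> rat set" where
  "Delta_closed scale u \<mu> f r s =
     ur_one_minus (\<mu> (Gen (ratR scale u r - f))) (\<mu> (Gen (f - ratR scale u s)))"

end

theory Submission
  imports Defs
begin

lemmas [trans] = spec_eq.trans

abbreviation (input) sle where "sle u x y \<equiv> spec_le u x y"

lemma se_idem: "spec_eq u (Meet x x) x"
proof -
  have h1: "spec_eq u (Meet x (Join x (Meet x x))) x" by (rule spec_eq.absorb2)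
  have h2: "spec_eq u (Meet x (Join x (Meet x x))) (Meet x x)"
    by (rule spec_eq.cong_meet[OF spec_eq.refl spec_eq.absorb1])
  show ?thesis by (rule spec_eq.trans[OF spec_eq.sym[OF h2] h1])
qed

lemma sle_refl: "spec_le u x x" unfolding spec_le_def by (rule se_idem)

lemma sle_trans: "spec_le u x y \<Longrightarrow> spec_le u y z \<Longrightarrow> spec_le u x z"
  unfolding spec_le_def
proof -
  assume a: "spec_eq u (Meet x y) x" and b: "spec_eq u (Meet y z) y"
  have "spec_eq u (Meet x z) (Meet (Meet x y) z)"
    by (rule spec_eq.cong_meet[OF spec_eq.sym[OF a] spec_eq.refl])
  also have "spec_eq u \<dots> (Meet x (Meet y z))" by (rule spec_eq.meet_assoc)
  also have "spec_eq u \<dots> (Meet x y)" by (rule spec_eq.cong_meet[OF spec_eq.refl b])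
  also have "spec_eq u \<dots> x" by (rule a)
  finally show "spec_eq u (Meet x z) x" .
qed

lemma sle_eq_right: "spec_le u x y \<Longrightarrow> spec_eq u y y' \<Longrightarrow> spec_le u x y'"
  unfolding spec_le_def
  by (rule spec_eq.trans[OF spec_eq.cong_meet[OF spec_eq.refl spec_eq.sym]])

lemma sle_eq_left: "spec_eq u x' x \<Longrightarrow> spec_le u x y \<Longrightarrow> spec_le u x' y"
  unfolding spec_le_def
proof -
  assume a: "spec_eq u x' x" and b: "spec_eq u (Meet x y) x"
  show "spec_eq u (Meet x' y) x'"
    by (rule spec_eq.trans[OF spec_eq.cong_meet[OF a spec_eq.refl] spec_eq.trans[OF b spec_eq.sym[OF a]]])
qed

lemma eq_sle: "spec_eq u x y \<Longrightarrow> spec_le u x y"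
  by (rule sle_eq_right[OF sle_refl])

lemma meet_le1: "spec_le u (Meet x y) x"
  unfolding spec_le_def
proof -
  have "spec_eq u (Meet (Meet x y) x) (Meet x (Meet y x))" by (rule spec_eq.meet_assoc)
  also have "spec_eq u \<dots> (Meet x (Meet x y))" by (rule spec_eq.cong_meet[OF spec_eq.refl spec_eq.meet_comm])
  also have "spec_eq u \<dots> (Meet (Meet x x) y)" by (rule spec_eq.sym[OF spec_eq.meet_assoc])
  also have "spec_eq u \<dots> (Meet x y)" by (rule spec_eq.cong_meet[OF se_idem spec_eq.refl])
  finally show "spec_eq u (Meet (Meet x y) x) (Meet x y)" .
qed

lemma meet_le2: "spec_le u (Meet x y) y"
  using sle_eq_left[OF spec_eq.meet_comm meet_le1] .

lemma meet_glb: "spec_le u z x \<Longrightarrow> spec_le u z y \<Longrightarrow> spec_le u z (Meet x y)"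
  unfolding spec_le_def
proof -
  assume a: "spec_eq u (Meet z x) z" and b: "spec_eq u (Meet z y) z"
  have "spec_eq u (Meet z (Meet x y)) (Meet (Meet z x) y)" by (rule spec_eq.sym[OF spec_eq.meet_assoc])
  also have "spec_eq u \<dots> (Meet z y)" by (rule spec_eq.cong_meet[OF a spec_eq.refl])
  also have "spec_eq u \<dots> z" by (rule b)
  finally show "spec_eq u (Meet z (Meet x y)) z" .
qed

lemma join_ge1: "spec_le u x (Join x y)"
  unfolding spec_le_def by (rule spec_eq.absorb2)

lemma join_ge2: "spec_le u y (Join x y)"
  using sle_eq_right[OF join_ge1 spec_eq.join_comm] .

lemma join_lub: "spec_le u x z \<Longrightarrow> spec_le u y z \<Longrightarrow> spec_le u (Join x y) z"
  unfolding spec_le_def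
proof -
  assume a: "spec_eq u (Meet x z) x" and b: "spec_eq u (Meet y z) y"
  have a': "spec_eq u (Meet z x) x" by (rule spec_eq.trans[OF spec_eq.meet_comm a])
  have b': "spec_eq u (Meet z y) y" by (rule spec_eq.trans[OF spec_eq.meet_comm b])
  have "spec_eq u (Meet (Join x y) z) (Meet z (Join x y))" by (rule spec_eq.meet_comm)
  also have "spec_eq u \<dots> (Join (Meet z x) (Meet z y))" by (rule spec_eq.distrib)
  also have "spec_eq u \<dots> (Join x y)" by (rule spec_eq.cong_join[OF a' b'])
  finally show "spec_eq u (Meet (Join x y) z) (Join x y)" .
qed

lemma le_top: "spec_le u x Top"
  unfolding spec_le_def by (rule spec_eq.meet_top)

lemma gen_mono: "a \<le> b \<Longrightarrow> spec_le u (Gen a) (Gen b)"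
proof -
  assume "a \<le> b"
  hence "sup a b = b" by (simp add: sup_absorb2)
  have "spec_eq u (Join (Gen a) (Gen b)) (Gen b)"
    using spec_eq.sym[OF spec_eq.D_sup[of u a b]] \<open>sup a b = b\<close> by simp
  thus ?thesis by (rule sle_eq_right[OF join_ge1])
qed

lemma gen_add: "spec_le u (Gen (a + b)) (Join (Gen a) (Gen b))"
proof -
  have "spec_le u (Meet (Gen (a + b)) (Join (Gen a) (Gen b))) (Join (Gen a) (Gen b))"
    by (rule meet_le2)
  thus ?thesis by (rule sle_eq_left[OF spec_eq.sym[OF spec_eq.D_add]])
qed

lemma gen_top_scale:
  assumes rs: "riesz_space_unit scale u" and d: "(0::rat) < d"
  shows "spec_le u Top (Gen (scale d u))"
proof -
  have vs: "module scale" using rs unfolding riesz_space_unit_def module_iff_vector_space by simp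
  have mono: "\<And>q a b. 0 \<le> q \<Longrightarrow> a \<le> b \<Longrightarrow> scale q a \<le> scale q b"
    and u0: "0 \<le> u" using rs unfolding riesz_space_unit_def by auto
  have ind: "spec_le u (Gen (scale (of_nat (Suc k) * d) u)) (Gen (scale d u))" for k
  proof (induction k)
    case 0 show ?case by (simp add: sle_refl)
  next
    case (Suc k)
    have "scale (of_nat (Suc (Suc k)) * d) u = scale (of_nat (Suc k) * d) u + scale d u"
      using module.scale_left_distrib[OF vs, of "of_nat (Suc k) * d" d u]
      by (simp add: algebra_simps)
    hence "spec_le u (Gen (scale (of_nat (Suc (Suc k)) * d) u))
       (Join (Gen (scale (of_nat (Suc k) * d) u)) (Gen (scale d u)))"
      by (subst \<open>scale (of_nat (Suc (Suc k)) * d) u = _\<close>) (rule gen_add)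
    moreover have "spec_le u (Join (Gen (scale (of_nat (Suc k) * d) u)) (Gen (scale d u))) (Gen (scale d u))"
      by (rule join_lub[OF Suc sle_refl])
    ultimately show ?case by (rule sle_trans)
  qed
  obtain n where n: "1 < of_nat n * d" using ex_less_of_nat_mult[OF d] by blast
  then obtain k where k: "n = Suc k" by (cases n) auto
  have "scale (of_nat n * d) u = u + scale (of_nat n * d - 1) u"
    using module.scale_left_diff_distrib[OF vs, of "of_nat n * d" 1 u] module.scale_one[OF vs, of u]
    by simp
  moreover have "0 \<le> scale (of_nat n * d - 1) u"
    using mono[of "of_nat n * d - 1" 0 u] u0 n module.scale_zero_right[OF vs] by simp
  ultimately have "u \<le> scale (of_nat n * d) u" by simp
  hence g1: "spec_le u (Gen u) (Gen (scale (of_nat n * d) u))" by (rule gen_mono)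
  have "spec_le u (Gen u) (Gen (scale d u))" using sle_trans[OF g1, of "Gen (scale d u)"] ind[of k] k by simp
  thus ?thesis by (rule sle_eq_left[OF spec_eq.sym[OF spec_eq.D_one]])
qed

lemma top_join:
  assumes rs: "riesz_space_unit scale u" and lt: "(x::rat) < y"
  shows "spec_le u Top (Join (Gen (f - ratR scale u x)) (Gen (ratR scale u y - f)))"
proof -
  have vs: "module scale" using rs unfolding riesz_space_unit_def module_iff_vector_space by simp
  have eq: "(f - ratR scale u x) + (ratR scale u y - f) = scale (y - x) u"
    unfolding ratR_def using module.scale_left_diff_distrib[OF vs, of y x u] by simp
  have "spec_le u (Gen (scale (y - x) u)) (Join (Gen (f - ratR scale u x)) (Gen (ratR scale u y - f)))"
    by (subst eq[symmetric]) (rule gen_add)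
  moreover have "spec_le u Top (Gen (scale (y - x) u))" using gen_top_scale[OF rs, of "y - x"] lt by simp
  ultimately show ?thesis using sle_trans by blast
qed

lemma subadd:
  assumes v: "valuation scale u \<mu>"
  shows "\<mu> (Join X Y) \<subseteq> lr_add (\<mu> X) (\<mu> Y)"
proof
  fix t assume t: "t \<in> \<mu> (Join X Y)"
  have nn: "\<And>x. nonneg_lower_real (\<mu> x)" using v unfolding valuation_def by blast
  obtain t' where t': "t' \<in> \<mu> (Join X Y)" "t < t'"
    using nn[of "Join X Y"] t unfolding nonneg_lower_real_def lower_real_def by blast
  have "t - t' \<in> \<mu> (Meet X Y)" using nn[of "Meet X Y"] t'(2) unfolding nonneg_lower_real_def by auto
  hence "t' + (t - t') \<in> lr_add (\<mu> (Join X Y)) (\<mu> (Meet X Y))" unfolding lr_add_def using t'(1)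
    by blast
  hence "t \<in> lr_add (\<mu> (Join X Y)) (\<mu> (Meet X Y))" by simp
  moreover have "lr_add (\<mu> X) (\<mu> Y) = lr_add (\<mu> (Join X Y)) (\<mu> (Meet X Y))"
    using v unfolding valuation_def by blast
  ultimately show "t \<in> lr_add (\<mu> X) (\<mu> Y)" by simp
qed

theorem lemma4p11:
  fixes scale :: "rat \<Rightarrow> 'a::lattice_ab_group_add \<Rightarrow> 'a"
    and u f :: 'a
    and \<mu> :: "'a latterm \<Rightarrow> rat set"
    and r r' s' s p q :: rat
  assumes "riesz_space_unit scale u"
    and "valuation scale u \<mu>"
    and "0 \<le> f"
    and "r < r'" and "r' < s'" and "s' < s"
    and "p < q"
  shows "p \<in> Delta_open scale u \<mu> f r s \<or> q \<in> Delta_closed scale u \<mu> f r' s'"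
proof -
  define P where "P = Gen (f - ratR scale u r)"
  define N where "N = Gen (ratR scale u s - f)"
  define A where "A = Gen (ratR scale u r' - f)"
  define B where "B = Gen (f - ratR scale u s')"
  define C where "C = Meet P N"
  have PA: "spec_le u Top (Join P A)" unfolding P_def A_def using top_join[OF assms(1) assms(4)] .
  have NB: "spec_le u Top (Join N B)"
  proof -
    have "spec_le u Top (Join B N)" unfolding N_def B_def
      using top_join[OF assms(1), of s' s f] assms(6) by simp
    thus ?thesis by (rule sle_eq_right[OF _ spec_eq.join_comm])
  qed
  let ?W = "Join (Join A B) C"
  have "spec_le u (Meet (Join P A) (Join N B)) ?W"
  proof -
    have e: "spec_eq u (Meet (Join P A) (Join N B)) (Join (Meet (Join P A) N) (Meet (Join P A) B))"
      by (rule spec_eq.distrib)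
    have h1: "spec_le u (Meet (Join P A) B) ?W"
      by (rule sle_trans[OF meet_le2 sle_trans[OF join_ge2 join_ge1]])
    have e2: "spec_eq u (Meet (Join P A) N) (Join (Meet N P) (Meet N A))"
      by (rule spec_eq.trans[OF spec_eq.meet_comm spec_eq.distrib])
    have m1: "spec_le u (Meet N P) ?W" unfolding C_def
      by (rule sle_trans[OF meet_glb[OF meet_le2 meet_le1] join_ge2])
    have m2: "spec_le u (Meet N A) ?W"
      by (rule sle_trans[OF meet_le2 sle_trans[OF join_ge1 join_ge1]])
    have h2: "spec_le u (Meet (Join P A) N) ?W"
      by (rule sle_eq_left[OF e2 join_lub[OF m1 m2]])
    show ?thesis using sle_eq_left[OF e join_lub[OF h2 h1]] .
  qed
  hence top: "spec_le u Top ?W" by (rule sle_trans[OF meet_glb[OF PA NB]])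
  have v: "valuation scale u \<mu>" by fact
  have nn: "\<And>x. nonneg_lower_real (\<mu> x)" using v unfolding valuation_def by blast
  have "\<mu> Top \<subseteq> \<mu> ?W" using v top unfolding valuation_def by blast
  moreover have "\<mu> Top = lr_const 1" using v unfolding valuation_def by blast
  ultimately have "lr_const 1 \<subseteq> \<mu> ?W" by simp
  hence "1 + p - q \<in> \<mu> ?W" unfolding lr_const_def using assms(7) by auto
  then obtain x c where x: "x \<in> \<mu> (Join A B)" and c: "c \<in> \<mu> C" and t: "1 + p - q = x + c"
    using subadd[OF v] unfolding lr_add_def by blast
  then obtain a b where a: "a \<in> \<mu> A" and b: "b \<in> \<mu> B" and xab: "x = a + b"
    using subadd[OF v] unfolding lr_add_def by blast
  show ?thesis
  proof (cases "p \<in> \<mu> C")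
    case True thus ?thesis unfolding Delta_open_def C_def P_def N_def by simp
  next
    case False
    have "c < p"
    proof (rule ccontr)
      assume "\<not> c < p"
      hence "p \<le> c" by simp
      thus False using nn[of C] c False unfolding nonneg_lower_real_def lower_real_def by blast
    qed
    hence "1 - a - b < q" using t xab by simp
    thus ?thesis unfolding Delta_closed_def ur_one_minus_def A_def[symmetric] B_def[symmetric]
      using a b by blast
  qed
qed

end
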